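(* Let $(k,\alpha)\in\Upsilon$, $w\in\operatorname{lext}(L_{k,\alpha})$, $\bar w\in\operatorname{lext}(w,L_{k,\alpha})$, let $x\in\Sigma_k$ be a letter that is a recurrent factor of $\bar w$, and let $t$ be a left infinite $\alpha$-power free word over $\Sigma_k$ with $\operatorname{occur}(t,x)=0$. Then there are finite words $w_1,w_2,g\in\Sigma_k^*$ such that $(w_1^R,w_2^R,x,g^R,t^R)\in\Gamma(k,\alpha)$, $w$ is a suffix of $gxw_2w_1$, and the left infinite word $txw_2w_1$ is $\alpha$-power free.
   Context: $\Sigma_k$ is an alphabet with $k$ letters. For a nonempty finite word $r$ and a rational $\beta\ge 1$ with $\beta|r|$ an integer, the $\beta$-power $r^\beta$ is the word $rr\cdots rt$ of length $\beta|r|$, where $t$ is a prefix of $r$. For rational $\alpha\ge1$, a word is $\alpha$-power free if it has no factor that is a $\beta$-power with $\beta\ge\alpha$, and $\alpha^+$-power free if it has no factor that is a $\beta$-power with $\beta>\alpha$; "$\alpha$" may denote a rational number or a symbol $\alpha^+$. $L_{k,\alpha}$ is the set of finite $\alpha$-power free words over $\Sigma_k$; an infinite word is $\alpha$-power free iff all its finite factors lie in $L_{k,\alpha}$; $L^{\mathbb N,R}_{k,\alpha}$ is the set of right infinite $\alpha$-power free words. $\Upsilon$ is the set of pairs: $(k,\alpha)$ with $k=3$ and rational $\alpha>2$; $(k,\alpha)$ with $k>3$ and rational $\alpha\ge2$; $(k,\alpha^+)$ with $k\ge3$ and rational $\alpha\ge2$. $\operatorname{occur}(w,s)$ is the number of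 occurrences of a nonempty word $s$ as a factor of $w$; $s$ is recurrent in an infinite word $w$ if $\operatorname{occur}(w,s)=\infty$. A word $w\in L$ is left extendable in $L$ if for every $n$ there is $u\in L$ with $|u|=n$ and $uw\in L$; $\operatorname{lext}(L)$ is the set of such words, and for $w\in\operatorname{lext}(L)$, $\operatorname{lext}(w,L)$ is the set of left infinite words all of whose finite suffixes lie in $L$ and which have $w$ as a suffix. The reversal $w^R$: if $w=w_1\cdots w_m$ then $w^R=w_m\cdots w_1$; if $w=\cdots w_2w_1$ is left infinite then $w^R=w_1w_2\cdots$ is right infinite (and conversely). For $(k,\alpha)\in\Upsilon$, $(w_1,w_2,x,g,t)\in\Gamma(k,\alpha)$ means: $w_1,w_2,g\in\Sigma_k^*$; $x\in\Sigma_k$; $w_1w_2xg\in L_{k,\alpha}$; $t\in L^{\mathbb N,R}_{k,\alpha}$; $\operatorname{occur}(t,x)=0$; $g$ is a prefix of $t$; $\operatorname{occur}(w_2xgy,xgy)=1$, where $y\in\Sigma_k$ is the letter with $gy$ a prefix of $t$; and $\operatorname{occur}(w_2,x)\ge\operatorname{occur}(w_1,x)$. *)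

theory Defs
  imports Complex_Main "HOL-Library.Sublist"
begin

text \<open>The alphabet \<open>\<Sigma>_k\<close> is \<open>{0..<k}\<close> (letters are naturals); finite words are lists.
  A right infinite word \<open>t = t_0 t_1 t_2 \<dots>\<close> is a function \<open>nat \<Rightarrow> nat\<close>.
  A left infinite word \<open>w = \<dots> w_2 w_1 w_0\<close> is also a function \<open>nat \<Rightarrow> nat\<close>, where
  \<open>w i\<close> is the letter at distance \<open>i\<close> from the right end.
  The exponent \<open>\<alpha>\<close> is a rational together with a flag \<open>pl\<close>; \<open>pl = True\<close> means
  the symbol \<open>\<alpha>\<^sup>+\<close>.\<close>

definition word_over :: "nat \<Rightarrow> nat list \<Rightarrow> bool" where
  "word_over k w \<longleftrightarrow> set w \<subseteq> {..<k}"

definition exceeds :: "rat \<Rightarrow> bool \<Rightarrow> rat \<Rightarrow> bool" where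
  "exceeds \<alpha> pl \<beta> \<longleftrightarrow> (if pl then \<beta> > \<alpha> else \<beta> \<ge> \<alpha>)"

definition is_power :: "nat list \<Rightarrow> rat \<Rightarrow> bool" where
  "is_power u \<beta> \<longleftrightarrow> (\<exists>p. 0 < p \<and> p \<le> length u \<and>
      (\<forall>i. i + p < length u \<longrightarrow> u ! i = u ! (i + p)) \<and>
      \<beta> = of_nat (length u) / of_nat p)"

definition power_free :: "rat \<Rightarrow> bool \<Rightarrow> nat list \<Rightarrow> bool" where
  "power_free \<alpha> pl w \<longleftrightarrow>
     \<not> (\<exists>u \<beta>. sublist u w \<and> is_power u \<beta> \<and> exceeds \<alpha> pl \<beta>)"

definition Lang :: "nat \<Rightarrow> rat \<Rightarrow> bool \<Rightarrow> nat list set" where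
  "Lang k \<alpha> pl = {w. word_over k w \<and> power_free \<alpha> pl w}"

definition Upsilon :: "nat \<Rightarrow> rat \<Rightarrow> bool \<Rightarrow> bool" where
  "Upsilon k \<alpha> pl \<longleftrightarrow>
     (\<not> pl \<and> k = 3 \<and> \<alpha> > 2) \<or> (\<not> pl \<and> k > 3 \<and> \<alpha> \<ge> 2) \<or> (pl \<and> k \<ge> 3 \<and> \<alpha> \<ge> 2)"

definition rfactor :: "(nat \<Rightarrow> nat) \<Rightarrow> nat \<Rightarrow> nat \<Rightarrow> nat list" where
  "rfactor t i n = map t [i..<i+n]"

definition lfactor :: "(nat \<Rightarrow> nat) \<Rightarrow> nat \<Rightarrow> nat \<Rightarrow> nat list" where
  "lfactor w i n = rev (map w [i..<i+n])"

definition rinf_pf :: "nat \<Rightarrow> rat \<Rightarrow> bool \<Rightarrow> (nat \<Rightarrow> nat) \<Rightarrow> bool" where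
  "rinf_pf k \<alpha> pl t \<longleftrightarrow> (\<forall>i n. rfactor t i n \<in> Lang k \<alpha> pl)"

definition linf_pf :: "nat \<Rightarrow> rat \<Rightarrow> bool \<Rightarrow> (nat \<Rightarrow> nat) \<Rightarrow> bool" where
  "linf_pf k \<alpha> pl w \<longleftrightarrow> (\<forall>i n. lfactor w i n \<in> Lang k \<alpha> pl)"

text \<open>Reversal of a left infinite word \<open>\<dots>w_2 w_1\<close> is \<open>w_1 w_2 \<dots>\<close>; with our
  encodings this is the identity on the underlying function.\<close>
definition lrev :: "(nat \<Rightarrow> nat) \<Rightarrow> (nat \<Rightarrow> nat)" where
  "lrev w = (\<lambda>i. w i)"

definition lconc :: "(nat \<Rightarrow> nat) \<Rightarrow> nat list \<Rightarrow> (nat \<Rightarrow> nat)" where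
  "lconc w u = (\<lambda>i. if i < length u then rev u ! i else w (i - length u))"

definition occur :: "nat list \<Rightarrow> nat list \<Rightarrow> nat" where
  "occur w s = card {i. i + length s \<le> length w \<and> take (length s) (drop i w) = s}"

definition occ_pos_R :: "(nat \<Rightarrow> nat) \<Rightarrow> nat list \<Rightarrow> nat set" where
  "occ_pos_R t s = {i. rfactor t i (length s) = s}"

definition occ_pos_L :: "(nat \<Rightarrow> nat) \<Rightarrow> nat list \<Rightarrow> nat set" where
  "occ_pos_L w s = {i. lfactor w i (length s) = s}"

definition lext :: "nat list set \<Rightarrow> nat list set" where
  "lext L = {w. w \<in> L \<and> (\<forall>n. \<exists>u. u \<in> L \<and> length u = n \<and> u @ w \<in> L)}"

definition lext_w :: "nat list \<Rightarrow> nat list set \<Rightarrow> (nat \<Rightarrow> nat) set" where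
  "lext_w w L = {v. (\<forall>n. lfactor v 0 n \<in> L) \<and> lfactor v 0 (length w) = w}"

definition Gamma :: "nat \<Rightarrow> rat \<Rightarrow> bool \<Rightarrow>
    (nat list \<times> nat list \<times> nat \<times> nat list \<times> (nat \<Rightarrow> nat)) set" where
  "Gamma k \<alpha> pl = {(w1, w2, x, g, t).
     word_over k w1 \<and> word_over k w2 \<and> word_over k g \<and> x < k \<and>
     w1 @ w2 @ [x] @ g \<in> Lang k \<alpha> pl \<and>
     rinf_pf k \<alpha> pl t \<and>
     occ_pos_R t [x] = {} \<and>
     rfactor t 0 (length g) = g \<and>
     (let y = t (length g) in occur (w2 @ [x] @ g @ [y]) ([x] @ g @ [y]) = 1) \<and>
     occur w2 [x] \<ge> occur w1 [x]}"

end

theory Submission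
  imports Defs "HOL-Library.Infinite_Set"
begin


lemma is_power_rev: "is_power u b \<Longrightarrow> is_power (rev u) b"
  unfolding is_power_def
proof (elim exE conjE, intro exI conjI)
  fix p assume p: "0 < p" "p \<le> length u" "\<forall>i. i + p < length u \<longrightarrow> u ! i = u ! (i + p)"
     "b = of_nat (length u) / of_nat p"
  show "0 < p" "p \<le> length (rev u)" "b = of_nat (length (rev u)) / of_nat p" using p by auto
  show "\<forall>i. i + p < length (rev u) \<longrightarrow> rev u ! i = rev u ! (i + p)"
  proof (intro allI impI)
    fix i assume i: "i + p < length (rev u)"
    have "u ! (length u - 1 - i - p) = u ! (length u - 1 - i - p + p)"
      using p(3) i by auto
    moreover have "length u - 1 - i - p + p = length u - 1 - i" using i by auto
    ultimately show "rev u ! i = rev u ! (i + p)" using i by (simp add: rev_nth)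
  qed
qed

lemma power_free_rev: "power_free a pl (rev s) = power_free a pl s"
proof -
  have *: "power_free a pl s" if "power_free a pl (rev s)" for s :: "nat list"
    using that unfolding power_free_def
    by (metis is_power_rev sublist_rev)
  show ?thesis using *[of s] *[of "rev s"] by auto
qed

lemma Lang_rev: "rev s \<in> Lang k a pl \<longleftrightarrow> s \<in> Lang k a pl"
  by (simp add: Lang_def word_over_def power_free_rev)

definition Pw :: "rat \<Rightarrow> bool \<Rightarrow> (nat \<Rightarrow> nat) \<Rightarrow> nat \<Rightarrow> nat \<Rightarrow> nat \<Rightarrow> bool" where
  "Pw a pl F i L p \<longleftrightarrow> 0 < p \<and> p \<le> L \<and> (\<forall>j. j + p < L \<longrightarrow> F (i + j) = F (i + j + p))
     \<and> exceeds a pl (of_nat L / of_nat p)"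

lemma pw_list: "(\<not> power_free a pl (map F [i..<i+n])) \<longleftrightarrow> (\<exists>b L p. i \<le> b \<and> b + L \<le> i + n \<and> Pw a pl F b L p)"
proof
  assume "\<not> power_free a pl (map F [i..<i+n])"
  then obtain u be where u: "sublist u (map F [i..<i+n])" "is_power u be" "exceeds a pl be"
    unfolding power_free_def by blast
  from u(1) obtain ps ss where s: "map F [i..<i+n] = ps @ u @ ss" unfolding sublist_def by blast
  from u(2) obtain p where p: "0 < p" "p \<le> length u" "\<forall>j. j + p < length u \<longrightarrow> u ! j = u ! (j + p)"
     "be = of_nat (length u) / of_nat p" unfolding is_power_def by blast
  have len: "length ps + length u + length ss = n" using arg_cong[OF s, of length] by simp
  have nth: "u ! j = F (i + length ps + j)" if "j < length u" for j
  proof -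
    have "(ps @ u @ ss) ! (length ps + j) = u ! j" using that by (simp add: nth_append)
    moreover have "map F [i..<i+n] ! (length ps + j) = F (i + (length ps + j))"
      using that len by simp
    ultimately show ?thesis using s by (simp add: add.assoc)
  qed
  have "Pw a pl F (i + length ps) (length u) p"
    unfolding Pw_def using p u(3) nth
    by (auto simp: add.assoc)
  then show "\<exists>b L p. i \<le> b \<and> b + L \<le> i + n \<and> Pw a pl F b L p"
    using len by (intro exI[of _ "i + length ps"] exI[of _ "length u"] exI[of _ p]) auto
next
  assume "\<exists>b L p. i \<le> b \<and> b + L \<le> i + n \<and> Pw a pl F b L p"
  then obtain b L p where b: "i \<le> b" "b + L \<le> i + n" "Pw a pl F b L p" by blast
  have "[i..<i+n] = [i..<b] @ [b..<b+L] @ [b+L..<i+n]"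
  proof -
    have "[i..<i+n] = [i..<b] @ [b..<i+n]" using b upt_add_eq_append[of i b "i+n-b"] by simp
    moreover have "[b..<i+n] = [b..<b+L] @ [b+L..<i+n]"
      using b upt_add_eq_append[of b "b+L" "i+n-(b+L)"] by simp
    ultimately show ?thesis by simp
  qed
  then have "sublist (map F [b..<b+L]) (map F [i..<i+n])"
    by (metis map_append sublist_appendI)
  moreover have "is_power (map F [b..<b+L]) (of_nat L / of_nat p)"
    using b(3) unfolding Pw_def is_power_def
    by (intro exI[of _ p]) (auto simp: nth_map_upt add.assoc [symmetric])
  ultimately show "\<not> power_free a pl (map F [i..<i+n])"
    using b(3) unfolding power_free_def Pw_def by blast
qed



lemma exceeds_2:
  assumes "Upsilon k a pl" "exceeds a pl (of_nat L / of_nat p)" "0 < p"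
  shows "2 * p \<le> L"
proof -
  have a2: "a \<ge> 2" using assms(1) unfolding Upsilon_def by auto
  have "of_nat L / of_nat p \<ge> (2::rat)" using assms(2) a2 unfolding exceeds_def
    by (auto split: if_splits)
  then have "of_nat L \<ge> (2::rat) * of_nat p" using assms(3) by (simp add: field_simps)
  then have "(of_nat (2 * p) :: rat) \<le> of_nat L" by simp
  then show ?thesis by (simp only: of_nat_le_iff)
qed

lemma core:
  assumes ex2: "\<And>L p. exceeds a pl (of_nat L / of_nat p) \<Longrightarrow> 0 < p \<Longrightarrow> 2*p \<le> L"
    and A: "\<And>b L p. b + L \<le> m+H+1 \<Longrightarrow> \<not> Pw a pl F b L p"
    and B: "\<And>b L p. m+1 \<le> b \<Longrightarrow> \<not> Pw a pl F b L p"
    and Fm: "F m = x" and noX: "\<And>q. m < q \<Longrightarrow> F q \<noteq> x"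
    and D: "\<And>q. Nz \<le> q \<Longrightarrow> q < m \<Longrightarrow> F q = x \<Longrightarrow> (\<forall>j\<le>H. F(q+1+j) = F(m+1+j)) \<Longrightarrow> False"
    and E: "card {q. q < Nz \<and> F q = x} \<le> card {q. Nz \<le> q \<and> q < m \<and> F q = x}"
    and Nz: "Nz \<le> m"
  shows "\<not> Pw a pl F b L p"
proof
  assume P: "Pw a pl F b L p"
  then have p0: "0 < p" and per: "\<And>j. j + p < L \<Longrightarrow> F (b + j) = F (b + j + p)"
    and L2: "2*p \<le> L" using ex2 unfolding Pw_def by auto
  have per2: "F q = F (q + p)" if "b \<le> q" "q + p < b + L" for q
    using per[of "q - b"] that by auto
  have c1: "m+H+1 < b + L" using A[of b L p] P by linarith
  have c2: "b \<le> m" using B[of b L p] P by linarith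
  have c3: "b + L \<le> m + p"
  proof (rule ccontr)
    assume "\<not> b + L \<le> m + p"
    then have "F m = F (m + p)" using per2[of m] c2 by auto
    then show False using Fm noX[of "m+p"] p0 by auto
  qed
  have c4: "b + p \<le> m" using c3 L2 by linarith
  define q0 where "q0 = m - p"
  have q0m: "q0 + p = m" "q0 < m" using c4 p0 unfolding q0_def by auto
  have Fq0: "F q0 = x" using per2[of q0] q0m c4 c1 Fm unfolding q0_def by auto
  have "\<forall>j\<le>H. F(q0+1+j) = F(m+1+j)"
  proof (intro allI impI)
    fix j assume "j \<le> H"
    then show "F(q0+1+j) = F(m+1+j)" using per2[of "q0+1+j"] q0m c4 c1
      by (simp add: q0_def add.commute add.left_commute)
  qed
  then have q0N: "q0 < Nz" using D[of q0] Fq0 q0m by fastforce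
  define S where "S = {q. q0 \<le> q \<and> q < m \<and> F q = x}"
  define sg where "sg = (\<lambda>q. if b + p \<le> q then q - p else q + p)"
  define X where "X = {q. q \<le> m \<and> F q = x}"
  have finX: "finite X" unfolding X_def by simp
  have SX: "S \<subseteq> X" unfolding S_def X_def by auto
  have sgX: "sg ` S \<subseteq> X"
  proof
    fix y assume "y \<in> sg ` S"
    then obtain q where q: "q \<in> S" "y = sg q" by auto
    have qq: "q0 \<le> q" "q < m" "F q = x" using q(1) unfolding S_def by auto
    have "F y = x"
    proof (cases "b + p \<le> q")
      case True
      then have "F (q - p) = F (q - p + p)" using per2[of "q-p"] qq c1 by auto
      then show ?thesis using True qq q(2) unfolding sg_def by auto
    next
      case False
      then have "F q = F (q + p)" using per2[of q] qq L2 c4 q0m by auto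
      then show ?thesis using False qq q(2) unfolding sg_def by auto
    qed
    moreover have "y \<le> m" using noX[of y] \<open>F y = x\<close> by force
    ultimately show "y \<in> X" unfolding X_def by auto
  qed
  have disj: "S \<inter> sg ` S = {}"
    unfolding S_def sg_def using q0m by auto
  have inj: "inj_on sg S"
    unfolding inj_on_def S_def sg_def using q0m by auto
  have finS: "finite S" unfolding S_def by simp
  have I1: "card S + card S \<le> card X"
  proof -
    have "card (S \<union> sg ` S) = card S + card (sg ` S)"
      using disj finS by (simp add: card_Un_disjoint)
    also have "card (sg ` S) = card S" using inj by (simp add: card_image)
    finally show ?thesis using card_mono[OF finX, of "S \<union> sg ` S"] SX sgX by simp
  qed
  define C1 where "C1 = {q. q < Nz \<and> F q = x}"
  define C2 where "C2 = {q. Nz \<le> q \<and> q < m \<and> F q = x}"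
  have XU: "X = C1 \<union> (C2 \<union> {m})" unfolding X_def C1_def C2_def using Fm Nz by auto
  have fC: "finite C1" "finite C2" unfolding C1_def C2_def by auto
  have dC: "C1 \<inter> (C2 \<union> {m}) = {}" "C2 \<inter> {m} = {}" unfolding C1_def C2_def using Nz by auto
  have I2: "card X = card C1 + (card C2 + 1)"
    unfolding XU using fC dC by (simp add: card_Un_disjoint)
  have I3: "card C2 + 1 \<le> card S"
  proof -
    have "insert q0 C2 \<subseteq> S" unfolding C2_def S_def using q0m q0N Fq0 by auto
    moreover have "q0 \<notin> C2" unfolding C2_def using q0N by auto
    ultimately have "card (insert q0 C2) = card C2 + 1" using fC(2) by simp
    then show ?thesis using card_mono[OF finS \<open>insert q0 C2 \<subseteq> S\<close>] by simp
  qed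
  have "card C1 \<le> card C2" using E unfolding C1_def C2_def .
  then show False using I1 I2 I3 by linarith
qed



lemma Pw_cong: "(\<And>q. b \<le> q \<Longrightarrow> q < b + L \<Longrightarrow> F q = G q) \<Longrightarrow> Pw a pl F b L p = Pw a pl G b L p"
  unfolding Pw_def by (auto simp: add.assoc)

lemma Pw_shift: "Pw a pl F b L p = Pw a pl (\<lambda>j. F (b + j)) 0 L p"
  unfolding Pw_def by (simp add: add.assoc)

lemma Pw_list_contra: "power_free a pl (map F [i..<i+n]) \<Longrightarrow> i \<le> b \<Longrightarrow> b + L \<le> i + n \<Longrightarrow> \<not> Pw a pl F b L p"
  using pw_list by blast

lemma occur_nth: "occur ws s = card {i. i + length s \<le> length ws \<and> (\<forall>j<length s. ws!(i+j) = s!j)}"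
  unfolding occur_def
proof (rule arg_cong[where f=card], rule Collect_cong)
  fix i
  show "(i + length s \<le> length ws \<and> take (length s) (drop i ws) = s) =
        (i + length s \<le> length ws \<and> (\<forall>j<length s. ws ! (i + j) = s ! j))"
  proof (cases "i + length s \<le> length ws")
    case True
    then show ?thesis by (auto simp: list_eq_iff_nth_eq)
  qed simp
qed

lemma occur_letter: "occur ws [x] = card {i. i < length ws \<and> ws ! i = x}"
  unfolding occur_nth by (rule arg_cong[where f=card]) auto

lemma upt3: "a \<le> b \<Longrightarrow> b \<le> c \<Longrightarrow> [a..<c] = [a..<b] @ [b..<c]"
  using upt_add_eq_append[of a b "c - b"] by simp



lemma assemble:
  fixes k :: nat and a :: rat and pl :: bool and w :: "nat list" and wbar t :: "nat \<Rightarrow> nat"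
  assumes U: "Upsilon k a pl"
    and wbarL: "\<And>n. lfactor wbar 0 n \<in> Lang k a pl"
    and ww: "lfactor wbar 0 (length w) = w"
    and xk: "x < k"
    and tpf: "linf_pf k a pl t"
    and tx: "\<And>i. t i \<noteq> x"
    and N0: "N0 \<le> m"
    and Wm: "wbar m = x"
    and Wt: "\<And>j. j < H \<Longrightarrow> wbar (m+1+j) = t j"
    and D: "\<And>q. N0 \<le> q \<Longrightarrow> q < m \<Longrightarrow> wbar q = x \<Longrightarrow> (\<forall>j<Suc H. wbar(q+1+j) = t j) \<Longrightarrow> False"
    and E: "card {q. q<N0 \<and> wbar q = x} \<le> card {q. N0 \<le> q \<and> q < m \<and> wbar q = x}"
    and lw: "length w \<le> m+1+H"
  shows "\<exists>w1 w2 g. word_over k w1 \<and> word_over k w2 \<and> word_over k g \<and>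
           (rev w1, rev w2, x, rev g, lrev t) \<in> Gamma k a pl \<and>
           suffix w (g @ [x] @ w2 @ w1) \<and>
           linf_pf k a pl (lconc t ([x] @ w2 @ w1))"
proof -
  define W1 where "W1 = map wbar [0..<N0]"
  define W2 where "W2 = map wbar [N0..<m]"
  define G where "G = map t [0..<H]"
  have wbk: "wbar q < k" for q
  proof -
    have "lfactor wbar 0 (Suc q) \<in> Lang k a pl" by (rule wbarL)
    then show ?thesis unfolding Lang_def word_over_def lfactor_def by auto
  qed
  have tk: "t q < k" for q
  proof -
    have "lfactor t q 1 \<in> Lang k a pl" using tpf unfolding linf_pf_def by blast
    then show ?thesis unfolding Lang_def word_over_def lfactor_def by auto
  qed
  have wbpf: "map wbar [0..<n] \<in> Lang k a pl" for n
    using wbarL[of n] Lang_rev unfolding lfactor_def by fastforce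
  have tpf2: "map t [i..<i+n] \<in> Lang k a pl" for i n
    using tpf Lang_rev unfolding lfactor_def linf_pf_def by fastforce
  have Gw: "G = map wbar [Suc m..<Suc m + H]"
    unfolding G_def by (rule nth_equalityI) (auto simp del: upt_Suc simp: Wt[symmetric])
  have W2xG: "W2 @ [x] @ G = map wbar [N0..<m+1+H]"
  proof -
    have "[N0..<m+1+H] = [N0..<m] @ [m..<Suc m] @ [Suc m..<Suc m + H]"
      using N0 upt3[of N0 m "m+1+H"] upt3[of m "Suc m" "m+1+H"] by simp
    then show ?thesis unfolding W2_def Gw using Wm by simp
  qed
  have PXG: "W1 @ W2 @ [x] @ G = map wbar [0..<m+1+H]"
    unfolding W2xG W1_def using upt3[of 0 N0 "m+1+H"] N0 by simp
  have PX: "W1 @ W2 @ [x] = map wbar [0..<Suc m]"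
  proof -
    have "[0..<Suc m] = [0..<N0] @ [N0..<m] @ [m]" using N0 upt3[of 0 N0 "Suc m"] upt3[of N0 m "Suc m"] by simp
    then show ?thesis unfolding W1_def W2_def using Wm by simp
  qed
  define F where "F = (\<lambda>i. if i \<le> m then wbar i else t (i - Suc m))"
  have Flc: "lconc t ([x] @ rev W2 @ rev W1) = F"
  proof
    fix i
    have R: "rev ([x] @ rev W2 @ rev W1) = map wbar [0..<Suc m]" using PX by simp
    have Lu: "length ([x] @ rev W2 @ rev W1) = Suc m"
      using arg_cong[OF R, of length] by (simp del: upt_Suc)
    show "lconc t ([x] @ rev W2 @ rev W1) i = F i"
      apply (simp only: lconc_def R Lu)
      apply (cases "i < Suc m")
       apply (simp del: upt_Suc add: F_def nth_map_upt)
      apply (simp add: F_def)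
      done
  qed
  have FW: "F i = wbar i" if "i \<le> m + H" for i
  proof (cases "i \<le> m")
    case False
    then have "wbar (m + 1 + (i - Suc m)) = t (i - Suc m)" using that by (intro Wt) auto
    then show ?thesis using False unfolding F_def by auto
  qed (simp add: F_def)
  have Ft: "F (m + 1 + j) = t j" for j unfolding F_def by simp
  have ex2: "\<And>L p. exceeds a pl (of_nat L / of_nat p) \<Longrightarrow> 0 < p \<Longrightarrow> 2*p \<le> L"
    using exceeds_2[OF U] by blast
  have noPw: "\<not> Pw a pl F b L p" for b L p
  proof (rule core[where m=m and H=H and Nz=N0 and x=x, OF ex2])
    show "\<not> Pw a pl F b L p" if "b + L \<le> m+H+1" for b L p
    proof -
      have "Pw a pl F b L p = Pw a pl wbar b L p" using that by (intro Pw_cong FW) auto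
      moreover have "power_free a pl (map wbar [0..<0 + (m+H+1)])"
        using wbpf[of "m+H+1"] unfolding Lang_def by simp
      ultimately show ?thesis using Pw_list_contra[of a pl wbar 0 "m+H+1" b L p] that by simp
    qed
    show "\<not> Pw a pl F b L p" if "m+1 \<le> b" for b L p
    proof -
      have "(\<lambda>j. F (b + j)) = (\<lambda>j. t (b - Suc m + j))" using that unfolding F_def by auto
      then have "Pw a pl F b L p = Pw a pl t (b - Suc m) L p" by (metis Pw_shift)
      moreover have "power_free a pl (map t [b - Suc m..<b - Suc m + L])"
        using tpf2 unfolding Lang_def by simp
      ultimately show ?thesis using Pw_list_contra[of a pl t "b - Suc m" L "b - Suc m" L p] by simp
    qed
    show "F m = x" using Wm unfolding F_def by simp
    show "F q \<noteq> x" if "m < q" for q using that tx unfolding F_def by simp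
    show False if "N0 \<le> q" "q < m" "F q = x" "\<forall>j\<le>H. F (q + 1 + j) = F (m + 1 + j)" for q
    proof (rule D[OF that(1,2)])
      show "wbar q = x" using that FW[of q] by simp
      show "\<forall>j<Suc H. wbar (q + 1 + j) = t j"
      proof (intro allI impI)
        fix j assume "j < Suc H"
        then show "wbar (q + 1 + j) = t j" using that(4) FW[of "q+1+j"] Ft[of j] that(2) by auto
      qed
    qed
    have "{q. q < N0 \<and> F q = x} = {q. q<N0 \<and> wbar q = x}" using N0 FW by auto
    moreover have "{q. N0 \<le> q \<and> q < m \<and> F q = x} = {q. N0 \<le> q \<and> q < m \<and> wbar q = x}" using FW by auto
    ultimately show "card {q. q < N0 \<and> F q = x} \<le> card {q. N0 \<le> q \<and> q < m \<and> F q = x}" using E by simp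
    show "N0 \<le> m" by (rule N0)
  qed
  have Fk: "F q < k" for q unfolding F_def using wbk tk by simp
  have linF: "linf_pf k a pl F"
    unfolding linf_pf_def lfactor_def Lang_rev
  proof (intro allI)
    fix i n
    show "map F [i..<i + n] \<in> Lang k a pl"
      unfolding Lang_def word_over_def using Fk noPw pw_list[of a pl F i n] by auto
  qed
  have Gam: "(W1, W2, x, G, lrev t) \<in> Gamma k a pl"
    unfolding Gamma_def
  proof (simp only: mem_Collect_eq prod.case, intro conjI)
    show "word_over k W1" "word_over k W2" "word_over k G" "x < k"
      unfolding W1_def W2_def G_def word_over_def using wbk tk xk by auto
    show "W1 @ W2 @ [x] @ G \<in> Lang k a pl" unfolding PXG by (rule wbpf)
    show "rinf_pf k a pl (lrev t)" unfolding rinf_pf_def rfactor_def lrev_def using tpf2 by simp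
    show "occ_pos_R (lrev t) [x] = {}" unfolding occ_pos_R_def rfactor_def lrev_def using tx by simp
    show "rfactor (lrev t) 0 (length G) = G" unfolding rfactor_def lrev_def G_def by simp
    show "occur W1 [x] \<le> occur W2 [x]"
    proof -
      have "occur W1 [x] = card {q. q<N0 \<and> wbar q = x}"
        unfolding occur_letter W1_def by (auto intro!: arg_cong[where f=card])
      moreover have "occur W2 [x] = card {q. N0 \<le> q \<and> q < m \<and> wbar q = x}"
      proof -
        have "occur W2 [x] = card {i. i < m - N0 \<and> wbar (N0 + i) = x}"
          unfolding occur_letter W2_def by (auto intro!: arg_cong[where f=card])
        also have "\<dots> = card ((\<lambda>i. i + N0) ` {i. i < m - N0 \<and> wbar (N0 + i) = x})"
          by (simp add: card_image)
        also have "(\<lambda>i. i + N0) ` {i. i < m - N0 \<and> wbar (N0 + i) = x} = {q. N0 \<le> q \<and> q < m \<and> wbar q = x}"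
        proof (rule set_eqI, rule iffI)
          fix q assume "q \<in> {q. N0 \<le> q \<and> q < m \<and> wbar q = x}"
          then show "q \<in> (\<lambda>i. i + N0) ` {i. i < m - N0 \<and> wbar (N0 + i) = x}"
            by (intro image_eqI[of _ _ "q - N0"]) auto
        qed (auto simp: add.commute)
        finally show ?thesis .
      qed
      ultimately show ?thesis using E by simp
    qed
    show "let y = lrev t (length G) in occur (W2 @ [x] @ G @ [y]) ([x] @ G @ [y]) = 1"
    proof -
      have y: "lrev t (length G) = t H" unfolding lrev_def G_def by simp
      define ws where "ws = W2 @ [x] @ G @ [t H]"
      have ws: "ws = map wbar [N0..<m+1+H] @ [t H]" unfolding ws_def using W2xG
        by (metis append.assoc)
      have lws: "length ws = m - N0 + H + 2" unfolding ws using N0 by simp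
      have wsn: "ws ! i = (if i < m - N0 + 1 + H then wbar (N0 + i) else t H)" if "i < m - N0 + H + 2" for i
        using that N0 unfolding ws by (auto simp del: upt_Suc simp: nth_append)
      define s where "s = x # map t [0..<Suc H]"
      have s: "[x] @ G @ [t H] = s" unfolding s_def G_def by simp
      have ls: "length s = H + 2" unfolding s_def by simp
      have sn: "s ! j = (if j = 0 then x else t (j - 1))" if "j < H + 2" for j
        using that unfolding s_def by (cases j) (auto simp del: upt_Suc)
      have "{i. i + length s \<le> length ws \<and> (\<forall>j<length s. ws!(i+j) = s!j)} = {m - N0}"
      proof (rule set_eqI, rule iffI)
        fix i assume "i \<in> {i. i + length s \<le> length ws \<and> (\<forall>j<length s. ws!(i+j) = s!j)}"
        then have i: "i \<le> m - N0" "\<And>j. j < H + 2 \<Longrightarrow> ws!(i+j) = s!j" unfolding ls lws by auto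
        show "i \<in> {m - N0}"
        proof (rule ccontr)
          assume "i \<notin> {m - N0}"
          then have il: "i < m - N0" using i by auto
          have e: "wbar (N0 + i + j) = s ! j" if "j < H + 2" for j
          proof -
            have "i + j < m - N0 + 1 + H" using il that by linarith
            then show ?thesis using i(2)[OF that] wsn[of "i+j"] by (simp add: add.assoc)
          qed
          show False
          proof (rule D[of "N0 + i"])
            show "N0 \<le> N0 + i" "N0 + i < m" using il by auto
            show "wbar (N0 + i) = x" using e[of 0] sn[of 0] by simp
            show "\<forall>j<Suc H. wbar (N0 + i + 1 + j) = t j"
            proof (intro allI impI)
              fix j assume j: "j < Suc H"
              have "wbar (N0 + i + Suc j) = s ! Suc j" using e[of "Suc j"] j by simp
              moreover have "s ! Suc j = t j" using sn[of "Suc j"] j by simp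
              ultimately show "wbar (N0 + i + 1 + j) = t j" by simp
            qed
          qed
        qed
      next
        fix i assume "i \<in> {m - N0}"
        then have i: "i = m - N0" by simp
        have "ws ! (i + j) = s ! j" if jH: "j < H + 2" for j
        proof -
          consider "j = 0" | "0 < j" "j \<le> H" | "j = H + 1" using jH by linarith
          then show ?thesis
          proof cases
            case 1
            then have "i + j < m - N0 + 1 + H" using i N0 by simp
            then have "ws ! (i + j) = wbar (N0 + (i + j))" using wsn[of "i+j"] by simp
            moreover have "N0 + (i + j) = m" using 1 i N0 by simp
            ultimately show ?thesis using sn[of j] 1 Wm by simp
          next
            case 2
            then have "i + j < m - N0 + 1 + H" using i N0 by simp
            then have "ws ! (i + j) = wbar (N0 + (i + j))" using wsn[of "i+j"] by simp
            moreover have "N0 + (i + j) = m + j" using i N0 by simp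
            ultimately have "ws ! (i + j) = wbar (m + j)" by simp
            moreover have "wbar (m + j) = t (j - 1)" using Wt[of "j - 1"] 2 by simp
            moreover have "s ! j = t (j - 1)" using sn[of j] 2 by simp
            ultimately show ?thesis by simp
          next
            case 3
            then have "\<not> i + j < m - N0 + 1 + H" "i + j < m - N0 + H + 2" using i N0 by simp_all
            then have "ws ! (i + j) = t H" using wsn[of "i+j"] by simp
            moreover have "s ! j = t H" using sn[of j] 3 by simp
            ultimately show ?thesis by simp
          qed
        qed
        then show "i \<in> {i. i + length s \<le> length ws \<and> (\<forall>j<length s. ws!(i+j) = s!j)}"
          unfolding ls lws using i N0 by auto
      qed
      then have "occur ws s = 1" by (simp only: occur_nth) simp
      then show ?thesis unfolding y Let_def ws_def s by simp
    qed
  qed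
  have suf: "suffix w (rev G @ [x] @ rev W2 @ rev W1)"
  proof -
    have e1: "rev G @ [x] @ rev W2 @ rev W1 = rev (map wbar [0..<m+1+H])"
      unfolding PXG[symmetric] by simp
    have e2: "[0..<m+1+H] = [0..<length w] @ [length w..<m+1+H]"
      by (rule upt3) (use lw in auto)
    have e3: "rev (map wbar [0..<length w]) = w" using ww unfolding lfactor_def by simp
    have "rev G @ [x] @ rev W2 @ rev W1 = rev (map wbar [length w..<m+1+H]) @ w"
      unfolding e1 e2 map_append rev_append e3 ..
    then show ?thesis by (simp add: suffix_def)
  qed
  show ?thesis
    apply (rule exI[of _ "rev W1"], rule exI[of _ "rev W2"], rule exI[of _ "rev G"])
    using Gam suf linF Flc wbk tk unfolding word_over_def W1_def W2_def G_def
    by auto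
qed



theorem mainTheorem7:
  fixes k :: nat and \<alpha> :: rat and pl :: bool
    and w :: "nat list" and wbar :: "nat \<Rightarrow> nat" and x :: nat and t :: "nat \<Rightarrow> nat"
  assumes "Upsilon k \<alpha> pl"
    and "w \<in> lext (Lang k \<alpha> pl)"
    and "wbar \<in> lext_w w (Lang k \<alpha> pl)"
    and "x < k"
    and "infinite (occ_pos_L wbar [x])"
    and "linf_pf k \<alpha> pl t"
    and "occ_pos_L t [x] = {}"
  shows "\<exists>w1 w2 g. word_over k w1 \<and> word_over k w2 \<and> word_over k g \<and>
           (rev w1, rev w2, x, rev g, lrev t) \<in> Gamma k \<alpha> pl \<and>
           suffix w (g @ [x] @ w2 @ w1) \<and>
           linf_pf k \<alpha> pl (lconc t ([x] @ w2 @ w1))"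
proof -
  note U = assms(1)
  have wbarL: "\<And>n. lfactor wbar 0 n \<in> Lang k \<alpha> pl" and ww: "lfactor wbar 0 (length w) = w"
    using assms(3) unfolding lext_w_def by auto
  have tx: "t i \<noteq> x" for i
  proof
    assume "t i = x"
    then have "i \<in> occ_pos_L t [x]" unfolding occ_pos_L_def lfactor_def by simp
    then show False using assms(7) by simp
  qed
  define S where "S n = {q. wbar q = x \<and> (\<forall>j<n. wbar(q+1+j) = t j)}" for n
  have S0: "S 0 = occ_pos_L wbar [x]" unfolding S_def occ_pos_L_def lfactor_def by auto
  have infS0: "infinite (S 0)" using S0 assms(5) by simp
  note asm = assemble[OF U wbarL ww assms(4) assms(6) tx]
  show ?thesis
  proof (cases "\<exists>n. finite (S n)")
    case True
    define n0 where "n0 = (LEAST n. finite (S n))"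
    have fn0: "finite (S n0)" unfolding n0_def using True by (metis LeastI)
    have n0: "n0 \<noteq> 0" using fn0 infS0 by (metis)
    define H where "H = n0 - 1"
    have n0H: "n0 = Suc H" using n0 unfolding H_def by simp
    have infH: "infinite (S H)" using not_less_Least[of H "\<lambda>n. finite (S n)"] n0H unfolding n0_def by simp
    obtain N0 where N0: "S (Suc H) \<subseteq> {..<N0}" using fn0 n0H finite_nat_iff_bounded by metis
    have "infinite (S H - {..<N0 + length w})" using infH by simp
    then obtain B where B: "finite B" "card B = Suc N0" "B \<subseteq> S H - {..<N0 + length w}"
      using infinite_arbitrarily_large by blast
    have Bne: "B \<noteq> {}" using B(2) by auto
    define m where "m = Max B"
    have mB: "m \<in> B" unfolding m_def using B(1) Bne by simp
    have mS: "m \<in> S H" "N0 + length w \<le> m" using mB B(3) by auto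
    have "B - {m} \<subseteq> {q. N0 \<le> q \<and> q < m \<and> wbar q = x}"
    proof
      fix q assume q: "q \<in> B - {m}"
      then have "q \<le> m" unfolding m_def using B(1) by simp
      then show "q \<in> {q. N0 \<le> q \<and> q < m \<and> wbar q = x}" using q B(3) unfolding S_def by auto
    qed
    then have c1: "N0 \<le> card {q. N0 \<le> q \<and> q < m \<and> wbar q = x}"
      using card_mono[of "{q. N0 \<le> q \<and> q < m \<and> wbar q = x}" "B - {m}"] B mB by simp
    have c2: "card {q. q < N0 \<and> wbar q = x} \<le> N0"
      using card_mono[of "{..<N0}" "{q. q < N0 \<and> wbar q = x}"] by auto
    show ?thesis
    proof (rule asm[of N0 m H])
      show "N0 \<le> m" using mS by simp
      show "wbar m = x" using mS unfolding S_def by simp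
      show "wbar (m + 1 + j) = t j" if "j < H" for j using mS that unfolding S_def by simp
      show False if "N0 \<le> q" "q < m" "wbar q = x" "\<forall>j<Suc H. wbar (q + 1 + j) = t j" for q
      proof -
        have "q \<in> S (Suc H)" using that unfolding S_def by simp
        then show False using N0 that(1) by auto
      qed
      show "card {q. q < N0 \<and> wbar q = x} \<le> card {q. N0 \<le> q \<and> q < m \<and> wbar q = x}"
        using c1 c2 by simp
      show "length w \<le> m + 1 + H" using mS by simp
    qed
  next
    case False
    then have infS: "infinite (S n)" for n by blast
    obtain m0 where m0: "m0 \<in> S (length w)" using infS[of "length w"] by (metis finite.emptyI ex_in_conv)
    obtain q' where q': "m0 < q'" "q' \<in> S 0" using infS0 unfolding infinite_nat_iff_unbounded by blast
    define Hs where "Hs = {h. \<exists>q\<le>m0. q \<in> S h}"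
    have Hsb: "Hs \<subseteq> {..q'}"
    proof
      fix h assume "h \<in> Hs"
      then obtain q where q: "q \<le> m0" "q \<in> S h" unfolding Hs_def by blast
      show "h \<in> {..q'}"
      proof (rule ccontr)
        assume "h \<notin> {..q'}"
        then have "q' - q - 1 < h" by simp
        then have "wbar (q + 1 + (q' - q - 1)) = t (q' - q - 1)" using q(2) unfolding S_def by blast
        moreover have "q + 1 + (q' - q - 1) = q'" using q(1) q'(1) by simp
        ultimately show False using q'(2) tx unfolding S_def by simp
      qed
    qed
    have finHs: "finite Hs" using Hsb finite_subset by blast
    have wHs: "length w \<in> Hs" unfolding Hs_def using m0 by blast
    define H where "H = Max Hs"
    have HHs: "H \<in> Hs" unfolding H_def using finHs wHs by (intro Max_in) auto
    have wH: "length w \<le> H" unfolding H_def using finHs wHs by simp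
    obtain m where m: "m \<le> m0" "m \<in> S H" using HHs unfolding Hs_def by blast
    show ?thesis
    proof (rule asm[of 0 m H])
      show "0 \<le> m" by simp
      show "wbar m = x" using m unfolding S_def by simp
      show "wbar (m + 1 + j) = t j" if "j < H" for j using m that unfolding S_def by simp
      show False if "0 \<le> q" "q < m" "wbar q = x" "\<forall>j<Suc H. wbar (q + 1 + j) = t j" for q
      proof -
        have "Suc H \<in> Hs" unfolding Hs_def using that m(1) unfolding S_def
          by (intro CollectI exI[of _ q]) simp
        then have "Suc H \<le> H" unfolding H_def using finHs by simp
        then show False by simp
      qed
      show "card {q. q < 0 \<and> wbar q = x} \<le> card {q. 0 \<le> q \<and> q < m \<and> wbar q = x}" by simp
      show "length w \<le> m + 1 + H" using wH by simp
    qed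
  qed
qed

end
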